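(* Let $s\ge 3$ be an integer, let $a,a_3,\dots,a_s\in\mathbb{R}$, and let \[ \psi(z)=\frac{1+\left(1-as\right)z+\left(\tfrac12-as+a^2\binom{s}{2}\right)z^2+\sum_{n=3}^{s}a_nz^n}{(1-az)^s}. \] (Every element of $\widehat{\Pi}_{s/s,2}$ can be written in this form.) If $R(\psi)>s-1$, then $a>0$.
   Context: A real rational function $\psi$ is always considered in lowest terms, as a smooth function on $\mathbb{R}$ minus its finitely many poles. It is absolutely monotonic at $x\in\mathbb{R}$ if $x$ is not a pole and $\psi^{(k)}(x)\ge 0$ for all integers $k\ge 0$. The radius of absolute monotonicity is $R(\psi)=\sup\big(\{r\in[0,\infty): \psi \text{ is absolutely monotonic at each point of } [-r,0]\}\cup\{0\}\big)\in[0,+\infty]$. $\widehat{\Pi}_{s/s,2}$ denotes the set of real rational functions $\psi(z)=P(z)/(1-az)^s$ with $P$ a real polynomial of degree at most $s$ and $a\in\mathbb{R}$, such that $\psi(z)-e^z=O(z^3)$ as $z\to0$. *)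

theory Defs
  imports "HOL-Analysis.Analysis" "HOL-Computational_Algebra.Polynomial_Factorial" "HOL-Computational_Algebra.Field_as_Ring"
begin

text \<open>A real rational function is given by a numerator p and a nonzero denominator q;
  it is always considered in lowest terms, i.e. as p' / q' with p' = p div gcd p q and
  q' = q div gcd p q. Its poles are the real roots of q'.\<close>

definition rf_num :: "real poly \<Rightarrow> real poly \<Rightarrow> real poly" where
  "rf_num p q = p div gcd p q"

definition rf_den :: "real poly \<Rightarrow> real poly \<Rightarrow> real poly" where
  "rf_den p q = q div gcd p q"

definition rf_fun :: "real poly \<Rightarrow> real poly \<Rightarrow> real \<Rightarrow> real" where
  "rf_fun p q = (\<lambda>y. poly (rf_num p q) y / poly (rf_den p q) y)"

definition abs_monotonic_at :: "real poly \<Rightarrow> real poly \<Rightarrow> real \<Rightarrow> bool" where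
  "abs_monotonic_at p q x \<longleftrightarrow>
     poly (rf_den p q) x \<noteq> 0 \<and> (\<forall>k::nat. (deriv ^^ k) (rf_fun p q) x \<ge> 0)"

definition radius_abs_mono :: "real poly \<Rightarrow> real poly \<Rightarrow> ereal" where
  "radius_abs_mono p q =
     Sup ({ereal r | r. r \<ge> 0 \<and> (\<forall>x\<in>{-r..0}. abs_monotonic_at p q x)} \<union> {0})"

end

theory Submission
  imports Defs
begin


lemma poly_higher_deriv: "(deriv ^^ k) (poly P) = poly ((pderiv ^^ k) P)"
proof (induction k)
  case 0 then show ?case by simp
next
  case (Suc k)
  show ?case
    by (simp add: Suc fun_eq_iff) (meson DERIV_imp_deriv poly_DERIV)
qed

lemma higher_deriv_transform_open:
  fixes f g :: "real \<Rightarrow> real"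
  assumes "open U" "\<And>y. y \<in> U \<Longrightarrow> f y = g y"
  shows "x \<in> U \<Longrightarrow> (deriv ^^ k) f x = (deriv ^^ k) g x"
proof (induction k arbitrary: x)
  case 0 then show ?case using assms by simp
next
  case (Suc k)
  have "eventually (\<lambda>y. y \<in> U) (nhds x)" using assms(1) Suc.prems eventually_nhds_in_open by blast
  then have "eventually (\<lambda>y. (deriv ^^ k) f y = (deriv ^^ k) g y) (nhds x)"
    by (rule eventually_mono) (use Suc.IH in auto)
  then show ?case by (simp add: deriv_cong_ev)
qed

definition smooth_on :: "(real \<Rightarrow> real) \<Rightarrow> real set \<Rightarrow> bool" where
  "smooth_on f U \<longleftrightarrow> (\<forall>k. \<forall>x\<in>U. (deriv ^^ k) f differentiable (at x))"

lemma smooth_on_D: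
  "smooth_on f U \<Longrightarrow> x \<in> U \<Longrightarrow> ((deriv ^^ k) f has_real_derivative (deriv ^^ Suc k) f x) (at x)"
  unfolding smooth_on_def by (simp add: DERIV_deriv_iff_real_differentiable)

lemma Suc_choose': "Suc n choose k = (n choose k) + (if k = 0 then 0 else (n choose (k-1)))"
  by (cases k) simp_all

lemma higher_deriv_mult_real:
  fixes f g :: "real \<Rightarrow> real"
  assumes "smooth_on f S" "smooth_on g S" "open S" and z: "z \<in> S"
    shows "(deriv ^^ n) (\<lambda>w. f w * g w) z =
           (\<Sum>i = 0..n. of_nat (n choose i) * (deriv ^^ i) f z * (deriv ^^ (n-i)) g z)"
using z
proof (induction n arbitrary: z)
  case 0 then show ?case by simp
next
  case (Suc n z)
  have *: "\<And>n. ((deriv ^^ n) f has_field_derivative deriv ((deriv ^^ n) f) z) (at z)"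
          "\<And>n. ((deriv ^^ n) g has_field_derivative deriv ((deriv ^^ n) g) z) (at z)"
    using Suc.prems assms smooth_on_D by auto
  have sumeq: "(\<Sum>i = 0..n.
               of_nat (n choose i) * (deriv ((deriv ^^ i) f) z * (deriv ^^ (n-i)) g z + deriv ((deriv ^^ (n-i)) g) z * (deriv ^^ i) f z)) =
            g z * deriv ((deriv ^^ n) f) z + (\<Sum>i = 0..n. (deriv ^^ i) f z * (of_nat (Suc n choose i) * (deriv ^^ (Suc n - i)) g z))"
    apply (simp add: Suc_choose' algebra_simps sum.distrib)
    apply (subst (4) sum_Suc_reindex)
    apply (auto simp: algebra_simps Suc_diff_le intro: sum.cong)
    done
  have "((deriv ^^ n) (\<lambda>w. f w * g w) has_field_derivative
         (\<Sum>i = 0..Suc n. (Suc n choose i) * (deriv ^^ i) f z * (deriv ^^ (Suc n - i)) g z))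
        (at z)"
    apply (rule has_field_derivative_transform_within_open
        [of "\<lambda>w. (\<Sum>i = 0..n. of_nat (n choose i) * (deriv ^^ i) f w * (deriv ^^ (n-i)) g w)" _ _ S])
       apply (simp add: algebra_simps)
       apply (rule derivative_eq_intros | simp)+
           apply (auto intro: DERIV_mult * \<open>open S\<close> Suc.prems Suc.IH [symmetric])
    by (metis (no_types, lifting) mult.commute sum.cong sumeq)
  then show ?case
    unfolding funpow.simps o_apply
    by (simp add: DERIV_imp_deriv)
qed



lemma key_ineq:
  fixes Q :: "real poly" and r :: real
  assumes "degree Q \<le> m"
    and "\<And>k x. x \<in> {-r..0} \<Longrightarrow> poly ((pderiv ^^ k) Q) x \<ge> 0"
    and "x \<in> {-r..0}"
  shows "real m * poly Q x - (x + r) * poly (pderiv Q) x \<ge> 0"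
  using assms
proof (induction m arbitrary: Q x)
  case 0
  then have "pderiv Q = 0" by (simp add: pderiv_eq_0_iff)
  then show ?case by simp
next
  case (Suc m)
  have dQ: "degree (pderiv Q) \<le> m" using Suc.prems(1) degree_pderiv by (metis diff_Suc_1 diff_le_mono)
  have nn: "\<And>k x. x \<in> {-r..0} \<Longrightarrow> poly ((pderiv ^^ k) (pderiv Q)) x \<ge> 0"
    using Suc.prems(2)[of _ "Suc _"] by (simp add: funpow_Suc_right del: funpow.simps)
  define R where "R = (\<lambda>y. real (Suc m) * poly Q y - (y + r) * poly (pderiv Q) y)"
  have "R (-r) \<le> R x"
  proof (rule DERIV_nonneg_imp_nondecreasing[of "-r" x R])
    show "- r \<le> x" using Suc.prems(3) by simp
    fix y assume y1: "- r \<le> y" and y2: "y \<le> x"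
    note y = y1 y2
    then have yI: "y \<in> {-r..0}" using Suc.prems(3) by auto
    have "(R has_real_derivative (real m * poly (pderiv Q) y - (y + r) * poly (pderiv (pderiv Q)) y)) (at y)"
      unfolding R_def
      by (auto intro!: derivative_eq_intros simp: algebra_simps)
    moreover have "real m * poly (pderiv Q) y - (y + r) * poly (pderiv (pderiv Q)) y \<ge> 0"
      using Suc.IH[OF dQ nn yI] by simp
    ultimately show "\<exists>z. (R has_real_derivative z) (at y) \<and> 0 \<le> z" by blast
  qed
  moreover have "R (-r) \<ge> 0" unfolding R_def
    using Suc.prems(2)[of "-r" 0] Suc.prems(3) by simp
  ultimately show ?case unfolding R_def by linarith
qed

definition LL :: "real \<Rightarrow> real poly" where "LL a = [:1, -a:]"

lemma pderiv_smult_LL_pow: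
  "pderiv (smult c (LL a ^ t)) = smult (c * real t * (-a)) (LL a ^ (t - 1))"
proof (cases t)
  case 0 then show ?thesis by simp
next
  case (Suc n)
  have "pderiv (LL a) = [:-a:]" by (simp add: LL_def pderiv_pCons)
  then show ?thesis unfolding Suc
    by (simp only: pderiv_smult pderiv_power_Suc) (simp add: smult_smult mult_ac)
qed

lemma LL_deriv_nonneg:
  assumes "a \<le> 0" "t = 0 \<or> 1 - a * x \<ge> 0" "c \<ge> 0"
  shows "poly ((pderiv ^^ k) (smult c (LL a ^ t))) x \<ge> 0"
  using assms(2,3)
proof (induction k arbitrary: c t)
  case 0
  then show ?case
  proof (cases "t = 0")
    case False
    then have "1 - x * a \<ge> 0" using 0 by (simp add: mult.commute)
    then show ?thesis using 0 by (simp add: LL_def)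
  qed simp
next
  case (Suc k)
  have "c * real t * (-a) \<ge> 0" using Suc.prems assms(1) by (simp add: mult_nonneg_nonpos)
  moreover have "t - 1 = 0 \<or> 1 - a * x \<ge> 0" using Suc.prems by auto
  ultimately have "poly ((pderiv ^^ k) (smult (c * real t * (-a)) (LL a ^ (t - 1)))) x \<ge> 0"
    using Suc.IH by blast
  then show ?case
    by (simp add: funpow_Suc_right pderiv_smult_LL_pow del: funpow.simps)
qed

lemma LL_pow_coeffs:
  "coeff (LL a ^ e) 0 = 1 \<and> coeff (LL a ^ e) 1 = - a * real e \<and>
   coeff (LL a ^ e) 2 = a^2 * real (e choose 2)"
proof (induction e)
  case 0 then show ?case by simp
next
  case (Suc e)
  have c: "coeff (LL a ^ Suc e) n = coeff (LL a ^ e) n - a * (if n = 0 then 0 else coeff (LL a ^ e) (n - 1))" for n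
    by (cases n) (auto simp: LL_def coeff_pCons algebra_simps)
  show ?case using Suc unfolding c
    by (simp add: c numeral_2_eq_2 choose_two algebra_simps power2_eq_square)
qed



lemma dvd_prime_pow_poly:
  fixes L d :: "real poly"
  assumes "prime_elem L"
  shows "d dvd L ^ s \<Longrightarrow> \<exists>c t. c \<noteq> 0 \<and> t \<le> s \<and> d = smult c (L ^ t)"
proof (induction s arbitrary: d)
  case 0
  then have "is_unit d" by simp
  then obtain c where d: "d = [:c:]" and cu: "is_unit c" by (auto simp: is_unit_poly_iff)
  have "c \<noteq> 0" using cu by auto
  then show ?case using d by (intro exI[of _ c] exI[of _ 0]) auto
next
  case (Suc s)
  show ?case
  proof (cases "L dvd d")
    case True
    then obtain d' where d': "d = L * d'" by (auto elim: dvdE)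
    have "L \<noteq> 0" using assms by auto
    then have "d' dvd L ^ s" using Suc.prems d' by simp
    from Suc.IH[OF this] obtain c t where "c \<noteq> 0" "t \<le> s" "d' = smult c (L ^ t)" by blast
    then show ?thesis using d' by (intro exI[of _ c] exI[of _ "Suc t"]) auto
  next
    case False
    then have "coprime d L" using assms
      by (meson coprime_commute prime_elem_imp_coprime)
    then have "d dvd L ^ s" using Suc.prems
      by (simp add: coprime_dvd_mult_right_iff)
    from Suc.IH[OF this] obtain c t where "c \<noteq> 0" "t \<le> s" "d = smult c (L ^ t)" by blast
    then show ?thesis by (intro exI[of _ c] exI[of _ t]) auto
  qed
qed

lemma rf_cross:
  assumes "q \<noteq> 0"
  shows "rf_num p q * q = rf_den p q * p" "rf_den p q \<noteq> 0"
proof -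
  define g where "g = gcd p q"
  have gp: "g dvd p" and gq: "g dvd q" by (auto simp: g_def)
  have "g \<noteq> 0" using assms gq by auto
  have q: "q = rf_den p q * g" using gq by (simp add: rf_den_def g_def)
  have p: "p = rf_num p q * g" using gp by (simp add: rf_num_def g_def)
  show "rf_num p q * q = rf_den p q * p"
    by (subst q, subst (2) p) (simp add: mult_ac)
  show "rf_den p q \<noteq> 0" using q assms by auto
qed

lemma rat_higher_deriv:
  fixes nn dd :: "real poly"
  shows "\<exists>A. \<forall>x. poly dd x \<noteq> 0 \<longrightarrow> (deriv ^^ k) (\<lambda>y. poly nn y / poly dd y) x = poly A x / poly dd x ^ Suc k"
proof (induction k)
  case 0 then show ?case by (intro exI[of _ nn]) simp
next
  case (Suc k)
  then obtain A where A: "\<And>x. poly dd x \<noteq> 0 \<Longrightarrow> (deriv ^^ k) (\<lambda>y. poly nn y / poly dd y) x = poly A x / poly dd x ^ Suc k"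
    by blast
  define U where "U = {x. poly dd x \<noteq> 0}"
  have oU: "open U" unfolding U_def
    by (rule open_Collect_neq) (auto intro: continuous_intros)
  define B where "B = pderiv A * dd - smult (real (Suc k)) (A * pderiv dd)"
  have "(deriv ^^ Suc k) (\<lambda>y. poly nn y / poly dd y) x = poly B x / poly dd x ^ Suc (Suc k)"
    if x: "poly dd x \<noteq> 0" for x
  proof -
    have "((\<lambda>y. poly A y / poly dd y ^ Suc k) has_real_derivative
       (poly (pderiv A) x * poly dd x ^ Suc k - poly A x * (real (Suc k) * poly dd x ^ k * poly (pderiv dd) x)) / (poly dd x ^ Suc k)^2) (at x)"
    proof -
      have der: "((\<lambda>y. poly dd y ^ Suc k) has_real_derivative (1 + real k) * (poly (pderiv dd) x * poly dd x ^ k)) (at x)"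
        by (rule DERIV_power_Suc[OF poly_DERIV])
      have "poly dd x ^ Suc k \<noteq> 0" using x by simp
      from DERIV_divide[OF poly_DERIV der this, of A] show ?thesis
        by (simp add: power2_eq_square mult_ac)
    qed
    also have "(poly (pderiv A) x * poly dd x ^ Suc k - poly A x * (real (Suc k) * poly dd x ^ k * poly (pderiv dd) x)) / (poly dd x ^ Suc k)^2
       = poly B x / poly dd x ^ Suc (Suc k)"
      using x by (simp add: B_def field_simps power2_eq_square)
    finally have d: "((\<lambda>y. poly A y / poly dd y ^ Suc k) has_real_derivative poly B x / poly dd x ^ Suc (Suc k)) (at x)" .
    have "((deriv ^^ k) (\<lambda>y. poly nn y / poly dd y) has_real_derivative poly B x / poly dd x ^ Suc (Suc k)) (at x)"
      by (rule has_field_derivative_transform_within_open[OF d oU]) (use x A in \<open>auto simp: U_def\<close>)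
    then show ?thesis by (simp add: DERIV_imp_deriv)
  qed
  then show ?case by blast
qed

lemma real_choose_two: "real (n choose 2) = real n * (real n - 1) / 2"
proof (induction n)
  case 0 then show ?case by simp
next
  case (Suc n)
  have "Suc n choose 2 = (n choose 1) + (n choose 2)"
    by (simp add: numeral_2_eq_2)
  then show ?case using Suc by (simp add: field_simps)
qed

lemma smooth_on_poly: "smooth_on (poly P) U"
  unfolding smooth_on_def poly_higher_deriv real_differentiable_def
  by (meson poly_DERIV)

lemma smooth_on_rat:
  fixes nn dd :: "real poly"
  shows "smooth_on (\<lambda>y. poly nn y / poly dd y) {x. poly dd x \<noteq> 0}"
  unfolding smooth_on_def
proof (intro allI ballI)
  fix k x assume x: "x \<in> {x. poly dd x \<noteq> 0}"
  define U where "U = {x. poly dd x \<noteq> 0}"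
  have oU: "open U" unfolding U_def
    by (rule open_Collect_neq) (auto intro: continuous_intros)
  obtain A where A: "\<And>x. poly dd x \<noteq> 0 \<Longrightarrow> (deriv ^^ k) (\<lambda>y. poly nn y / poly dd y) x = poly A x / poly dd x ^ Suc k"
    using rat_higher_deriv by blast
  have "\<exists>D. ((\<lambda>y. poly A y / poly dd y ^ Suc k) has_real_derivative D) (at x)"
    using x by (intro exI) (auto intro!: derivative_eq_intros)
  then obtain D where D: "((\<lambda>y. poly A y / poly dd y ^ Suc k) has_real_derivative D) (at x)" by blast
  have "((deriv ^^ k) (\<lambda>y. poly nn y / poly dd y) has_real_derivative D) (at x)"
    by (rule has_field_derivative_transform_within_open[OF D oU]) (use x A in \<open>auto simp: U_def\<close>)
  then show "(deriv ^^ k) (\<lambda>y. poly nn y / poly dd y) differentiable (at x)"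
    unfolding real_differentiable_def by blast
qed

theorem mainTheorem2:
  fixes s :: nat and a :: real and c :: "nat \<Rightarrow> real"
  assumes "s \<ge> 3"
  assumes "radius_abs_mono
             ([:1, 1 - a * real s, 1/2 - a * real s + a^2 * real (s choose 2):]
               + (\<Sum>n = 3..s. monom (c n) n))
             ([:1, - a:] ^ s) > ereal (real s - 1)"
  shows "a > 0"
proof (rule ccontr)
  assume "\<not> a > 0"
  then have a0: "a \<le> 0" by simp
  define p0 where "p0 = [:1, 1 - a * real s, 1/2 - a * real s + a^2 * real (s choose 2):]
               + (\<Sum>n = 3..s. monom (c n) n)"
  define L where "L = LL a"
  have L: "[:1, - a:] = L" by (simp add: L_def LL_def)
  define q0 where "q0 = L ^ s"
  define nn where "nn = rf_num p0 q0"
  define dd where "dd = rf_den p0 q0"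
  have psi: "rf_fun p0 q0 = (\<lambda>y. poly nn y / poly dd y)"
    by (simp add: rf_fun_def nn_def dd_def)
  have "ereal (real s - 1) < radius_abs_mono p0 q0" using assms(2) by (simp add: p0_def q0_def L)
  then obtain z where zS: "z \<in> {ereal r | r. r \<ge> 0 \<and> (\<forall>x\<in>{-r..0}. abs_monotonic_at p0 q0 x)} \<union> {0}"
      and zl: "ereal (real s - 1) < z"
    unfolding radius_abs_mono_def less_Sup_iff by blast
  obtain r where r0: "r \<ge> 0" and ram: "\<forall>x\<in>{-r..0}. abs_monotonic_at p0 q0 x" and rs: "real s - 1 < r"
  proof -
    have "z \<noteq> 0" using zl assms(1) by (auto simp: zero_ereal_def)
    then obtain r where "z = ereal r" "r \<ge> 0" "\<forall>x\<in>{-r..0}. abs_monotonic_at p0 q0 x" using zS by blast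
    then show ?thesis using that zl by auto
  qed
  have L0: "L \<noteq> 0" by (simp add: L_def LL_def)
  have q0nz: "q0 \<noteq> 0" using L0 by (simp add: q0_def)
  have cross: "nn * q0 = dd * p0" and ddnz: "dd \<noteq> 0"
    using rf_cross[OF q0nz] by (simp_all add: nn_def dd_def)
  have dddvd: "dd dvd q0"
    unfolding dd_def rf_den_def by (metis dvd_div_mult_self gcd_dvd2 dvd_triv_left)
  obtain cc t where cc: "cc \<noteq> 0" and ts: "t \<le> s" and ddf: "dd = smult cc (L ^ t)" and a0t: "a = 0 \<longrightarrow> t = s"
  proof (cases "a = 0")
    case True
    then have "L = 1" by (simp add: L_def LL_def one_pCons)
    then have "is_unit dd" using dddvd by (simp add: q0_def)
    then obtain c where d: "dd = [:c:]" and cu: "is_unit c" by (auto simp: is_unit_poly_iff)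
    have "c \<noteq> 0" using cu by auto
    then show ?thesis using that[of c s] d \<open>L = 1\<close> True by simp
  next
    case False
    have "prime_elem L" unfolding L_def LL_def using False by (intro prime_elem_linear_field_poly) simp
    from dvd_prime_pow_poly[OF this, of dd s] dddvd obtain c t where
      "c \<noteq> 0" "t \<le> s" "dd = smult c (L ^ t)" by (auto simp: q0_def)
    then show ?thesis using that False by blast
  qed
  define e where "e = s - t"
  have se: "s = t + e" using ts by (simp add: e_def)
  define N where "N = smult (1 / cc) nn"
  have nnN: "nn = smult cc N" using cc by (simp add: N_def)
  have NLp: "N * L ^ e = p0"
  proof -
    have "smult cc (L ^ t * (N * L ^ e)) = smult cc (L ^ t * p0)"
      using cross by (simp add: nnN ddf q0_def se power_add mult_ac)
    then have "smult (1/cc) (smult cc (L ^ t * (N * L ^ e))) = smult (1/cc) (smult cc (L ^ t * p0))"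
      by simp
    then have eq: "L ^ t * (N * L ^ e) = L ^ t * p0" using cc by (simp only: smult_smult) simp
    have "L ^ t \<noteq> 0" using L0 by simp
    with eq show ?thesis by (metis mult_left_cancel)
  qed
  have degp: "degree p0 \<le> s"
    unfolding p0_def
  proof (rule order.trans[OF degree_add_le_max], rule max.boundedI)
    show "degree [:1, 1 - a * real s, 1 / 2 - a * real s + a\<^sup>2 * real (s choose 2):] \<le> s"
      using assms(1) by auto
    show "degree (\<Sum>n = 3..s. monom (c n) n) \<le> s"
      by (rule degree_sum_le) (auto intro: order.trans[OF degree_monom_le])
  qed
  have degN: "degree N \<le> t"
  proof (cases "a = 0")
    case True
    then have "L = 1" by (simp add: L_def LL_def one_pCons)
    then show ?thesis using NLp degp True a0t by simp
  next
    case False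
    have dL: "degree L = 1" using False by (simp add: L_def LL_def)
    show ?thesis
    proof (cases "N = 0")
      case False
      have "degree (N * L ^ e) = degree N + e"
        using False L0 dL by (simp add: degree_mult_eq degree_power_eq)
      then show ?thesis using NLp degp se by simp
    qed simp
  qed
  have cp0: "coeff p0 0 = 1" "coeff p0 1 = 1 - a * real s"
    "coeff p0 2 = 1/2 - a * real s + a^2 * real (s choose 2)"
    unfolding p0_def by (auto simp: coeff_sum coeff_monom numeral_2_eq_2)
  have cL: "coeff (L ^ e) 0 = 1" "coeff (L ^ e) 1 = - a * real e" "coeff (L ^ e) 2 = a^2 * real (e choose 2)"
    using LL_pow_coeffs[of a e] by (simp_all add: L_def)
  have cm: "coeff (N * L ^ e) 0 = coeff N 0 * coeff (L^e) 0"
    "coeff (N * L ^ e) 1 = coeff N 0 * coeff (L^e) 1 + coeff N 1 * coeff (L^e) 0"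
    "coeff (N * L ^ e) 2 = coeff N 0 * coeff (L^e) 2 + coeff N 1 * coeff (L^e) 1 + coeff N 2 * coeff (L^e) 0"
    by (simp_all add: coeff_mult numeral_2_eq_2 atMost_Suc)
  have n0: "coeff N 0 = 1" using cm(1) cL cp0 NLp by simp
  have n1: "coeff N 1 = 1 - a * real t" using cm(2) cL cp0 NLp n0 se by (simp add: algebra_simps)
  have n2: "2 * coeff N 2 = 1 - 2 * a * real t + a^2 * real t * (real t - 1)"
  proof -
    have "coeff N 2 = 1/2 - a * real s + a^2 * real (s choose 2) - a^2 * real (e choose 2) + a * real e * (1 - a * real t)"
    proof -
      have h: "coeff N 0 * coeff (L^e) 2 + coeff N 1 * coeff (L^e) 1 + coeff N 2 * coeff (L^e) 0 = coeff p0 2"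
        using cm(3) NLp by simp
      then show ?thesis unfolding n0 n1 cL cp0 by (simp add: algebra_simps)
    qed
    then show ?thesis unfolding real_choose_two se by (simp add: field_simps power2_eq_square)
  qed
  define U where "U = {y. poly dd y \<noteq> 0}"
  have oU: "open U" unfolding U_def
    by (rule open_Collect_neq) (auto intro: continuous_intros)
  have IU: "{-r..0} \<subseteq> U" using ram by (auto simp: abs_monotonic_at_def U_def dd_def)
  have eqU: "poly N y = poly nn y / poly dd y * poly (L ^ t) y" if "y \<in> U" for y
    using that cc by (simp add: U_def nnN ddf)
  have tpos: "t = 0 \<or> 1 - a * x \<ge> 0" if x: "x \<in> {-r..0}" for x
  proof (cases "t = 0 \<or> a = 0")
    case False
    then have an: "a < 0" and tp: "t > 0" using a0 by auto
    have "poly dd (1/a) = 0" using an tp by (simp add: ddf L_def LL_def)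
    moreover have "1/a < 0" using an by simp
    ultimately have "1/a \<notin> {-r..0}" using IU by (auto simp: U_def subset_iff)
    moreover have "1/a < 0" using an by simp
    ultimately have "1/a < x" using x by auto
    then have "a * x < a * (1/a)" using an by (rule mult_strict_left_mono_neg)
    then show ?thesis using an by simp
  qed auto
  have Nam: "poly ((pderiv ^^ k) N) x \<ge> 0" if x: "x \<in> {-r..0}" for k x
  proof -
    have xU: "x \<in> U" using x IU by auto
    have "poly ((pderiv ^^ k) N) x = (deriv ^^ k) (poly N) x" by (simp add: poly_higher_deriv)
    also have "\<dots> = (deriv ^^ k) (\<lambda>y. poly nn y / poly dd y * poly (L ^ t) y) x"
      by (rule higher_deriv_transform_open[OF oU eqU xU])
    also have "\<dots> = (\<Sum>i = 0..k. of_nat (k choose i) * (deriv ^^ i) (\<lambda>y. poly nn y / poly dd y) x * (deriv ^^ (k-i)) (poly (L ^ t)) x)"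
      by (rule higher_deriv_mult_real[OF _ smooth_on_poly oU xU]) (use smooth_on_rat in \<open>simp add: U_def\<close>)
    also have "\<dots> \<ge> 0"
    proof (rule sum_nonneg)
      fix i assume "i \<in> {0..k}"
      have "(deriv ^^ i) (\<lambda>y. poly nn y / poly dd y) x \<ge> 0"
        using ram x by (auto simp: abs_monotonic_at_def psi)
      moreover have "(deriv ^^ (k-i)) (poly (L ^ t)) x \<ge> 0"
        using LL_deriv_nonneg[OF a0 tpos[OF x], of 1 "k-i"] by (simp add: poly_higher_deriv L_def)
      ultimately show "0 \<le> of_nat (k choose i) * (deriv ^^ i) (\<lambda>y. poly nn y / poly dd y) x * (deriv ^^ (k-i)) (poly (L ^ t)) x"
        by simp
    qed
    finally show ?thesis .
  qed
  have degdN: "degree (pderiv N) \<le> t - 1" using degN by (simp add: degree_pderiv)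
  have "real (t - 1) * poly (pderiv N) 0 - (0 + r) * poly (pderiv (pderiv N)) 0 \<ge> 0"
  proof (rule key_ineq[OF degdN])
    show "poly ((pderiv ^^ k) (pderiv N)) x \<ge> 0" if "x \<in> {-r..0}" for k x
      using Nam[OF that, of "Suc k"] by (simp add: funpow_Suc_right del: funpow.simps)
    show "0 \<in> {-r..0}" using r0 by simp
  qed
  moreover have "poly (pderiv N) 0 = coeff N 1" by (simp add: poly_0_coeff_0 coeff_pderiv)
  moreover have "poly (pderiv (pderiv N)) 0 = 2 * coeff N 2"
    by (simp add: poly_0_coeff_0 coeff_pderiv numeral_2_eq_2)
  ultimately have fin: "real (t - 1) * (1 - a * real t) \<ge> r * (1 - 2 * a * real t + a^2 * real t * (real t - 1))"
    using n1 n2 by simp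
  show False
  proof (cases "t = 0")
    case True
    then show ?thesis using fin rs assms(1) by simp
  next
    case False
    then have t1: "real (t - 1) = real t - 1" by simp
    have "a * real t \<le> 0" using a0 by (simp add: mult_nonpos_nonneg)
    then have h1: "0 < 1 - a * real t" by simp
    have h2: "1 - a * real t \<le> 1 - 2 * a * real t + a^2 * real t * (real t - 1)"
    proof -
      have "- a * real t \<ge> 0" using a0 by (simp add: mult_nonpos_nonneg)
      moreover have "a^2 * real t * (real t - 1) \<ge> 0" using False by simp
      ultimately show ?thesis by simp
    qed
    have "real t - 1 < r" using rs ts by linarith
    then have "(real t - 1) * (1 - a * real t) < r * (1 - a * real t)"
      using h1 by (simp add: mult_strict_right_mono)
    also have "\<dots> \<le> r * (1 - 2 * a * real t + a^2 * real t * (real t - 1))"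
      using h2 r0 by (simp add: mult_left_mono)
    finally show ?thesis using fin t1 by simp
  qed
qed

end
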